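(* Let $F$ be a hypergraph with $i(F)=\{I_1,\dots,I_k\}$. Let $H,H_1,H_2$ be hypergraphs with $H=H_1\cup H_2$, and let $S$ be a set with $V(H_1)\cap V(H_2)\subseteq S$ and $S\subseteq V(H_1)\cap V(H_2)$. Let $A_1,\dots,A_k\in tr_S(i(H))$ be such that $\{\bigcap_{i:x\in I_i}A_i\}_{x\in V(F)}$ covers $S$. Then the following are equivalent: (1) $f_H^S(A_1,\dots,A_k)=1$; (2) there exist $A_i^j\in tr_S(i(H_j))$ for $i\in[k]$, $j\in[2]$, with $A_i\subseteq A_i^1\cap A_i^2$ for all $i$, and $f_{H_j}^S(A_1^j,\dots,A_k^j)=1$ for $j=1,2$.
   Context: A hypergraph $H$ has a finite vertex set $V(H)$ and a set $E(H)$ of subsets of $V(H)$. A set of vertices is independent if it contains no edge; $i(H)$ is the family of inclusion-wise maximal independent sets. $H=H_1\cup H_2$ means $V(H)=V(H_1)\cup V(H_2)$ and $E(H)=E(H_1)\cup E(H_2)$. $tr_S(\mathcal{F})=\{X\cap S:X\in\mathcal{F}\}$. A family of sets covers a set $Y$ if its union contains $Y$. An intersection over an empty family is taken to be the whole ambient vertex set. For a hypergraph $H$ and $S\subseteq V(H)$, $f_H^S(A_1,\dots,A_k)=1$ iff: (a) there exist $J_1,\dots,J_k\in i(H)$ such that $\{\bigcap_{i:x\in I_i}J_i\}_{x\in V(F)}$ covers $V(H)$; (b) $\{\bigcap_{i:x\in I_i}A_i\}_{x\in V(F)}$ covers $S$; and (c) $A_i\subseteq J_i$ for all $i$ (with the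 same $J_i$ as in (a)); otherwise $f_H^S(A_1,\dots,A_k)=0$. *)

theory Defs
  imports Main
begin

type_synonym 'a hypergraph = "'a set \<times> 'a set set"

definition verts :: "'a hypergraph \<Rightarrow> 'a set" where "verts H = fst H"
definition edges :: "'a hypergraph \<Rightarrow> 'a set set" where "edges H = snd H"

definition hypergraph :: "'a hypergraph \<Rightarrow> bool" where
  "hypergraph H \<longleftrightarrow> finite (verts H) \<and> (\<forall>e\<in>edges H. e \<subseteq> verts H)"

definition hunion :: "'a hypergraph \<Rightarrow> 'a hypergraph \<Rightarrow> 'a hypergraph" where
  "hunion H1 H2 = (verts H1 \<union> verts H2, edges H1 \<union> edges H2)"

definition independent :: "'a hypergraph \<Rightarrow> 'a set \<Rightarrow> bool" where
  "independent H X \<longleftrightarrow> X \<subseteq> verts H \<and> (\<forall>e\<in>edges H. \<not> e \<subseteq> X)"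

definition mis :: "'a hypergraph \<Rightarrow> 'a set set" where
  "mis H = {X. independent H X \<and> (\<forall>Y. independent H Y \<and> X \<subseteq> Y \<longrightarrow> Y = X)}"

definition tr :: "'a set \<Rightarrow> 'a set set \<Rightarrow> 'a set set" where
  "tr S \<F> = {X \<inter> S | X. X \<in> \<F>}"

text \<open>The intersection of X_i over all i < k with x in I_i, inside the ambient set U
  (empty intersection = U).\<close>
definition gint :: "'a set \<Rightarrow> nat \<Rightarrow> (nat \<Rightarrow> 'b set) \<Rightarrow> (nat \<Rightarrow> 'a set) \<Rightarrow> 'b \<Rightarrow> 'a set" where
  "gint U k I X x = U \<inter> (\<Inter>i\<in>{i. i < k \<and> x \<in> I i}. X i)"

definition covers :: "'a set \<Rightarrow> nat \<Rightarrow> 'b hypergraph \<Rightarrow> (nat \<Rightarrow> 'b set) \<Rightarrow> (nat \<Rightarrow> 'a set) \<Rightarrow> 'a set \<Rightarrow> bool" where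
  "covers U k F I X Y \<longleftrightarrow> Y \<subseteq> (\<Union>x\<in>verts F. gint U k I X x)"

text \<open>f_H^S(A_1..A_k), relative to F with i(F) = {I_1..I_k}.\<close>
definition fHS :: "'b hypergraph \<Rightarrow> nat \<Rightarrow> (nat \<Rightarrow> 'b set) \<Rightarrow> 'a hypergraph \<Rightarrow> 'a set
    \<Rightarrow> (nat \<Rightarrow> 'a set) \<Rightarrow> bool" where
  "fHS F k I H S A \<longleftrightarrow> (\<exists>J. (\<forall>i<k. J i \<in> mis H)
      \<and> covers (verts H) k F I J (verts H)
      \<and> covers (verts H) k F I A S
      \<and> (\<forall>i<k. A i \<subseteq> J i))"

end

theory Submission
  imports Defs
begin

lemma ext_mis:
  assumes "hypergraph H" "independent H X"
  shows "\<exists>Y\<in>mis H. X \<subseteq> Y"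
proof -
  let ?A = "{Y. independent H Y \<and> X \<subseteq> Y}"
  have "?A \<subseteq> Pow (verts H)" by (auto simp: independent_def)
  moreover have "finite (Pow (verts H))" using assms(1) by (simp add: hypergraph_def)
  ultimately have fin: "finite ?A" by (rule finite_subset)
  have ne: "?A \<noteq> {}" using assms(2) by auto
  obtain m where m: "m \<in> ?A" "\<forall>b\<in>?A. m \<le> b \<longrightarrow> m = b"
    using finite_has_maximal[OF fin ne] by blast
  have "m \<in> mis H" unfolding mis_def using m by auto
  then show ?thesis using m by auto
qed

lemma gint_mono:
  assumes "y \<in> gint U k I X x" "y \<in> U'" "\<And>i. i<k \<Longrightarrow> x \<in> I i \<Longrightarrow> y \<in> X i \<Longrightarrow> y \<in> Y i"
  shows "y \<in> gint U' k I Y x"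
  using assms by (auto simp: gint_def)

lemma fwd:
  assumes hj: "hypergraph Hj" and v: "verts Hj \<subseteq> verts H" and e: "edges Hj \<subseteq> edges H"
    and s: "S \<subseteq> verts Hj" and a: "\<forall>i<k. A i \<subseteq> S" and f: "fHS F k I H S A"
  shows "\<exists>Aj. (\<forall>i<k. Aj i \<in> tr S (mis Hj) \<and> A i \<subseteq> Aj i) \<and> fHS F k I Hj S Aj"
proof -
  obtain J where J: "\<forall>i<k. J i \<in> mis H" "covers (verts H) k F I J (verts H)"
      "covers (verts H) k F I A S" "\<forall>i<k. A i \<subseteq> J i"
    using f unfolding fHS_def by blast
  have "\<forall>i<k. \<exists>Y\<in>mis Hj. J i \<inter> verts Hj \<subseteq> Y"
  proof (intro allI impI)
    fix i assume "i < k"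
    then have "independent H (J i)" using J(1) by (simp add: mis_def)
    then have "independent Hj (J i \<inter> verts Hj)" using e unfolding independent_def by blast
    then show "\<exists>Y\<in>mis Hj. J i \<inter> verts Hj \<subseteq> Y" using ext_mis[OF hj] by blast
  qed
  then obtain J1 where J1: "\<And>i. i<k \<Longrightarrow> J1 i \<in> mis Hj \<and> J i \<inter> verts Hj \<subseteq> J1 i" by metis
  define Aj where "Aj i = J1 i \<inter> S" for i
  have 1: "\<forall>i<k. Aj i \<in> tr S (mis Hj) \<and> A i \<subseteq> Aj i"
  proof (intro allI impI conjI)
    fix i assume i: "i < k"
    show "Aj i \<in> tr S (mis Hj)" unfolding tr_def Aj_def using J1[OF i] by blast
    have "A i \<subseteq> J i \<inter> verts Hj" using J(4) a s i by blast
    then show "A i \<subseteq> Aj i" unfolding Aj_def using J1[OF i] a i by blast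
  qed
  have 2: "covers (verts Hj) k F I J1 (verts Hj)"
    unfolding covers_def
  proof
    fix y assume y: "y \<in> verts Hj"
    then obtain x where x: "x \<in> verts F" "y \<in> gint (verts H) k I J x"
      using J(2) v unfolding covers_def by blast
    have "y \<in> gint (verts Hj) k I J1 x" using x(2) y J1 by (intro gint_mono[OF x(2)]) auto
    then show "y \<in> (\<Union>x\<in>verts F. gint (verts Hj) k I J1 x)" using x(1) by blast
  qed
  have 3: "covers (verts Hj) k F I Aj S"
    unfolding covers_def
  proof
    fix y assume y: "y \<in> S"
    then obtain x where x: "x \<in> verts F" "y \<in> gint (verts H) k I A x"
      using J(3) unfolding covers_def by blast
    have "y \<in> gint (verts Hj) k I Aj x" using y s 1 by (intro gint_mono[OF x(2)]) auto
    then show "y \<in> (\<Union>x\<in>verts F. gint (verts Hj) k I Aj x)" using x(1) by blast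
  qed
  have "fHS F k I Hj S Aj" unfolding fHS_def using J1 2 3 unfolding Aj_def by blast
  then show ?thesis using 1 by blast
qed

theorem mainTheorem13:
  fixes F :: "'b hypergraph" and I :: "nat \<Rightarrow> 'b set" and k :: nat
    and H H1 H2 :: "'a hypergraph" and S :: "'a set" and A :: "nat \<Rightarrow> 'a set"
  assumes "hypergraph F" and "hypergraph H1" and "hypergraph H2"
    and "mis F = I ` {..<k}" and "inj_on I {..<k}"
    and "H = hunion H1 H2"
    and "verts H1 \<inter> verts H2 \<subseteq> S" and "S \<subseteq> verts H1 \<inter> verts H2"
    and "\<forall>i<k. A i \<in> tr S (mis H)"
    and "covers (verts H) k F I A S"
  shows "fHS F k I H S A \<longleftrightarrow>
    (\<exists>A1 A2. (\<forall>i<k. A1 i \<in> tr S (mis H1) \<and> A2 i \<in> tr S (mis H2) \<and> A i \<subseteq> A1 i \<inter> A2 i)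
       \<and> fHS F k I H1 S A1 \<and> fHS F k I H2 S A2)"
proof -
  have vH: "verts H = verts H1 \<union> verts H2" and eH: "edges H = edges H1 \<union> edges H2"
    using assms(6) by (auto simp: hunion_def verts_def edges_def)
  have aS: "\<forall>i<k. A i \<subseteq> S" using assms(9) unfolding tr_def by blast
  have hH: "hypergraph H" using assms(2,3) vH eH unfolding hypergraph_def by auto
  show ?thesis
  proof
    assume f: "fHS F k I H S A"
    obtain A1 where A1: "\<forall>i<k. A1 i \<in> tr S (mis H1) \<and> A i \<subseteq> A1 i" "fHS F k I H1 S A1"
      using fwd[OF assms(2) _ _ _ aS f] vH eH assms(8) by blast
    obtain A2 where A2: "\<forall>i<k. A2 i \<in> tr S (mis H2) \<and> A i \<subseteq> A2 i" "fHS F k I H2 S A2"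
      using fwd[OF assms(3) _ _ _ aS f] vH eH assms(8) by blast
    show "\<exists>A1 A2. (\<forall>i<k. A1 i \<in> tr S (mis H1) \<and> A2 i \<in> tr S (mis H2) \<and> A i \<subseteq> A1 i \<inter> A2 i)
       \<and> fHS F k I H1 S A1 \<and> fHS F k I H2 S A2"
      using A1 A2 by blast
  next
    assume "\<exists>A1 A2. (\<forall>i<k. A1 i \<in> tr S (mis H1) \<and> A2 i \<in> tr S (mis H2) \<and> A i \<subseteq> A1 i \<inter> A2 i)
       \<and> fHS F k I H1 S A1 \<and> fHS F k I H2 S A2"
    then obtain A1 A2 where AA: "\<forall>i<k. A i \<subseteq> A1 i \<inter> A2 i"
      and f1: "fHS F k I H1 S A1" and f2: "fHS F k I H2 S A2" by blast
    obtain J1 where J1: "\<forall>i<k. J1 i \<in> mis H1" "covers (verts H1) k F I J1 (verts H1)"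
        "\<forall>i<k. A1 i \<subseteq> J1 i"
      using f1 unfolding fHS_def by blast
    obtain J2 where J2: "\<forall>i<k. J2 i \<in> mis H2" "covers (verts H2) k F I J2 (verts H2)"
        "\<forall>i<k. A2 i \<subseteq> J2 i"
      using f2 unfolding fHS_def by blast
    define K where "K i = (J1 i - S) \<union> (J2 i - S) \<union> A i" for i
    have "\<forall>i<k. \<exists>Y\<in>mis H. K i \<subseteq> Y"
    proof (intro allI impI)
      fix i assume i: "i < k"
      have i1: "independent H1 (J1 i)" "independent H2 (J2 i)"
        using J1(1) J2(1) i by (auto simp: mis_def)
      have "independent H (K i)" unfolding independent_def
      proof
        have "J1 i \<subseteq> verts H1" "J2 i \<subseteq> verts H2" using i1 by (simp_all add: independent_def)
        moreover have "A i \<subseteq> S" using aS i by blast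
        ultimately show "K i \<subseteq> verts H" using vH assms(8) unfolding K_def by blast
        show "\<forall>e\<in>edges H. \<not> e \<subseteq> K i"
        proof
          fix e assume "e \<in> edges H"
          then consider "e \<in> edges H1" | "e \<in> edges H2" using eH by blast
          then show "\<not> e \<subseteq> K i"
          proof cases
            case 1
            then have "e \<subseteq> verts H1" using assms(2) unfolding hypergraph_def by blast
            moreover have "\<not> e \<subseteq> J1 i" using 1 i1 unfolding independent_def by blast
            moreover have "J2 i \<subseteq> verts H2" using i1 unfolding independent_def by blast
            moreover have "K i \<inter> verts H1 \<subseteq> J1 i"
            proof
              fix y assume y: "y \<in> K i \<inter> verts H1"
              have "A i \<subseteq> J1 i" using AA J1(3) i by blast
              moreover have "y \<notin> J2 i - S" using y assms(7) \<open>J2 i \<subseteq> verts H2\<close> by blast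
              ultimately show "y \<in> J1 i" using y unfolding K_def by blast
            qed
            ultimately show ?thesis by blast
          next
            case 2
            then have "e \<subseteq> verts H2" using assms(3) unfolding hypergraph_def by blast
            moreover have "\<not> e \<subseteq> J2 i" using 2 i1 unfolding independent_def by blast
            moreover have "J1 i \<subseteq> verts H1" using i1 unfolding independent_def by blast
            moreover have "K i \<inter> verts H2 \<subseteq> J2 i"
            proof
              fix y assume y: "y \<in> K i \<inter> verts H2"
              have "A i \<subseteq> J2 i" using AA J2(3) i by blast
              moreover have "y \<notin> J1 i - S" using y assms(7) \<open>J1 i \<subseteq> verts H1\<close> by blast
              ultimately show "y \<in> J2 i" using y unfolding K_def by blast
            qed
            ultimately show ?thesis by blast
          qed
        qed
      qed
      then show "\<exists>Y\<in>mis H. K i \<subseteq> Y" using ext_mis[OF hH] by blast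
    qed
    then obtain J where J: "\<And>i. i<k \<Longrightarrow> J i \<in> mis H \<and> K i \<subseteq> J i" by metis
    have cov: "covers (verts H) k F I J (verts H)"
      unfolding covers_def
    proof
      fix y assume y: "y \<in> verts H"
      show "y \<in> (\<Union>x\<in>verts F. gint (verts H) k I J x)"
      proof (cases "y \<in> S")
        case True
        then obtain x where x: "x \<in> verts F" "y \<in> gint (verts H) k I A x"
          using assms(10) unfolding covers_def by blast
        have "y \<in> gint (verts H) k I J x" using y J by (intro gint_mono[OF x(2)]) (auto simp: K_def)
        then show ?thesis using x(1) by blast
      next
        case False
        then consider "y \<in> verts H1" | "y \<in> verts H2" using y vH by blast
        then show ?thesis
        proof cases
          case 1
          then obtain x where x: "x \<in> verts F" "y \<in> gint (verts H1) k I J1 x"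
            using J1(2) unfolding covers_def by blast
          have "y \<in> gint (verts H) k I J x" using y J False by (intro gint_mono[OF x(2)]) (auto simp: K_def)
          then show ?thesis using x(1) by blast
        next
          case 2
          then obtain x where x: "x \<in> verts F" "y \<in> gint (verts H2) k I J2 x"
            using J2(2) unfolding covers_def by blast
          have "y \<in> gint (verts H) k I J x" using y J False by (intro gint_mono[OF x(2)]) (auto simp: K_def)
          then show ?thesis using x(1) by blast
        qed
      qed
    qed
    show "fHS F k I H S A" unfolding fHS_def
    proof (intro exI conjI)
      show "\<forall>i<k. J i \<in> mis H" using J by blast
      show "\<forall>i<k. A i \<subseteq> J i" using J unfolding K_def by blast
    qed (use cov assms(10) in auto)
  qed
qed

end
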